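(* Let $k\geq 2$ and $n\geq k$ be integers. In the quasi-shuffle algebra $(\mathcal{H},\ast)$, $$ \sum_{\substack{ r, s_i\geq 1 \\ r+s_1+\cdots +s_{k-1}=n}} z_{r}\ast z_{s_1,\dots, s_{k-1}} = k \sum_{\substack{t_i\geq 1 \\ t_1+\cdots+t_{k}=n}} z_{t_1,\dots, t_{k}} + (n-k+1) \sum_{\substack{u_i\geq 1 \\ u_1+\cdots+u_{k-1}=n }} z_{u_1,\dots, u_{k-1}}. $$
   Context: Let $\mathcal{H}$ be the free $\mathbb{Z}$-module on the free monoid generated by letters $z_s$ ($s\geq 1$ an integer); write $z_{s_1,\dots,s_k}:=z_{s_1}z_{s_2}\cdots z_{s_k}$ for a word and $1$ for the empty word. The quasi-shuffle (stuffle) product $\ast$ is the $\mathbb{Z}$-bilinear product on $\mathcal{H}$ defined on words recursively by $1\ast u=u\ast 1=u$ and $(z_{r}u)\ast(z_{s}v)=z_{r}\,(u\ast (z_{s}v))+z_{s}\,((z_{r}u)\ast v)+z_{r+s}\,(u\ast v)$ for words $u,v$ and integers $r,s\geq 1$ (juxtaposition denotes concatenation, extended linearly). *)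

theory Defs
  imports Main "HOL-Library.Poly_Mapping"
begin

text \<open>The free Z-module H on words in letters z_s (s >= 1): a word z_{s1,...,sk} is the
list [s1,...,sk] of positive naturals; elements of H are finitely supported functions
from words to integers.\<close>

type_synonym qsh = "nat list \<Rightarrow>\<^sub>0 int"

definition word :: "nat list \<Rightarrow> qsh" where
  "word w = Poly_Mapping.single w 1"

definition lcons :: "nat \<Rightarrow> qsh \<Rightarrow> qsh" where
  "lcons a p = (\<Sum>w\<in>Poly_Mapping.keys p. Poly_Mapping.single (a # w) (Poly_Mapping.lookup p w))"

fun stuffle_w :: "nat list \<Rightarrow> nat list \<Rightarrow> qsh" where
  "stuffle_w [] v = word v"
| "stuffle_w u [] = word u"
| "stuffle_w (r # u) (s # v) =
     lcons r (stuffle_w u (s # v)) + lcons s (stuffle_w (r # u) v) + lcons (r + s) (stuffle_w u v)"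

definition stuffle :: "qsh \<Rightarrow> qsh \<Rightarrow> qsh" (infixl "\<star>" 70) where
  "p \<star> q = (\<Sum>u\<in>Poly_Mapping.keys p. \<Sum>v\<in>Poly_Mapping.keys q.
      Poly_Mapping.map (\<lambda>x. Poly_Mapping.lookup p u * Poly_Mapping.lookup q v * x) (stuffle_w u v))"

definition smul :: "int \<Rightarrow> qsh \<Rightarrow> qsh" where
  "smul c p = Poly_Mapping.map (\<lambda>x. c * x) p"

definition compositions :: "nat \<Rightarrow> nat \<Rightarrow> nat list set" where
  "compositions m n = {ts. length ts = m \<and> (\<forall>t\<in>set ts. 1 \<le> t) \<and> sum_list ts = n}"

end

theory Submission imports Defs begin

lemma lookup_word: "Poly_Mapping.lookup (word v) w = (if v = w then 1 else 0)"
  by (simp add: word_def lookup_single when_def)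

lemma lookup_lcons: "Poly_Mapping.lookup (lcons a p) w =
   (case w of [] \<Rightarrow> 0 | b # v \<Rightarrow> if b = a then Poly_Mapping.lookup p v else 0)"
proof -
  have "Poly_Mapping.lookup (lcons a p) w =
     (\<Sum>v\<in>Poly_Mapping.keys p. (if a # v = w then Poly_Mapping.lookup p v else 0))"
    by (simp add: lcons_def lookup_sum lookup_single when_def)
  also have "\<dots> = (case w of [] \<Rightarrow> 0 | b # v \<Rightarrow> if b = a then Poly_Mapping.lookup p v else 0)"
  proof (cases w)
    case Nil then show ?thesis by simp
  next
    case (Cons b v)
    show ?thesis
    proof (cases "b = a")
      case True
      have "(\<Sum>u\<in>Poly_Mapping.keys p. (if a # u = w then Poly_Mapping.lookup p u else 0))
          = (\<Sum>u\<in>Poly_Mapping.keys p. (if u = v then Poly_Mapping.lookup p u else 0))"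
        using Cons True by (intro sum.cong) auto
      also have "\<dots> = Poly_Mapping.lookup p v"
        by (simp add: sum.delta in_keys_iff)
      finally show ?thesis using Cons True by simp
    qed (use Cons in simp)
  qed
  finally show ?thesis .
qed

lemma lcons_add: "lcons a (p + q) = lcons a p + lcons a q"
  by (rule poly_mapping_eqI) (simp add: lookup_lcons lookup_add split: list.split)

lemma lcons_zero: "lcons a 0 = 0"
  by (rule poly_mapping_eqI) (simp add: lookup_lcons split: list.split)

lemma lcons_sum: "lcons a (\<Sum>x\<in>A. f x) = (\<Sum>x\<in>A. lcons a (f x))"
  by (induction A rule: infinite_finite_induct) (auto simp: lcons_zero lcons_add)

lemma lcons_word: "lcons a (word v) = word (a # v)"
  by (rule poly_mapping_eqI) (auto simp: lookup_lcons lookup_word split: list.split)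

lemma lookup_smul: "Poly_Mapping.lookup (smul c p) w = c * Poly_Mapping.lookup p w"
  by (simp add: smul_def map.rep_eq when_def)

lemma smul_add: "smul c (p + q) = smul c p + smul c q"
  by (rule poly_mapping_eqI) (simp add: lookup_smul lookup_add algebra_simps)

lemma smul_add_left: "smul (c + d) p = smul c p + smul d p"
  by (rule poly_mapping_eqI) (simp add: lookup_smul lookup_add algebra_simps)

lemma smul_one: "smul 1 p = p"
  by (rule poly_mapping_eqI) (simp add: lookup_smul)

lemma smul_zero: "smul c 0 = 0"
  by (rule poly_mapping_eqI) (simp add: lookup_smul)

lemma smul_zero_left: "smul 0 p = 0"
  by (rule poly_mapping_eqI) (simp add: lookup_smul)

lemma smul_sum: "smul c (\<Sum>x\<in>A. f x) = (\<Sum>x\<in>A. smul c (f x))"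
  by (rule poly_mapping_eqI) (simp add: lookup_smul lookup_sum sum_distrib_left)

lemma smul_lcons: "smul c (lcons a p) = lcons a (smul c p)"
  by (rule poly_mapping_eqI) (simp add: lookup_smul lookup_lcons split: list.split)

lemma smul_self: "p + smul c p = smul (c + 1) p"
  by (rule poly_mapping_eqI) (simp add: lookup_smul lookup_add algebra_simps)

lemma sum_const_smul: "(\<Sum>x\<in>A. p) = smul (int (card A)) p"
  by (rule poly_mapping_eqI) (simp add: lookup_smul lookup_sum)

lemma stuffle_words: "word u \<star> word v = stuffle_w u v"
  by (rule poly_mapping_eqI) (simp add: stuffle_def word_def map.rep_eq when_def)


lemma comp_finite: "finite (compositions m n)"
proof -
  have "compositions m n \<subseteq> {xs. set xs \<subseteq> {0..n} \<and> length xs = m}"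
    unfolding compositions_def using member_le_sum_list by fastforce
  moreover have "finite {xs. set xs \<subseteq> {0..n} \<and> length xs = m}"
    by (rule finite_lists_length_eq) simp
  ultimately show ?thesis by (rule finite_subset)
qed

lemma comp_zero: "compositions 0 n = (if n = 0 then {[]} else {})"
  by (auto simp: compositions_def)

lemma comp_Suc_eq: "compositions (Suc m) x =
   (\<lambda>(s, v). s # v) ` Sigma {1..x} (\<lambda>s. compositions m (x - s))"
proof (rule set_eqI, rule iffI)
  fix ts assume "ts \<in> compositions (Suc m) x"
  then obtain s v where ts: "ts = s # v" and "1 \<le> s" "length v = m" "\<forall>t\<in>set v. 1 \<le> t"
     "s + sum_list v = x"
    by (cases ts) (auto simp: compositions_def)
  then show "ts \<in> (\<lambda>(s, v). s # v) ` Sigma {1..x} (\<lambda>s. compositions m (x - s))"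
    by (auto simp: compositions_def intro!: image_eqI[where x="(s, v)"])
qed (auto simp: compositions_def)

lemma comp_Suc_sum: "(\<Sum>ss\<in>compositions (Suc m) x. f ss) =
   (\<Sum>s\<in>{1..x}. \<Sum>v\<in>compositions m (x - s). f (s # v))"
proof -
  have inj: "inj_on (\<lambda>(s, v). s # v) (Sigma {1..x} (\<lambda>s. compositions m (x - s)))"
    by (auto simp: inj_on_def)
  show ?thesis
    unfolding comp_Suc_eq sum.reindex[OF inj]
    by (subst sum.Sigma) (simp_all add: comp_finite split_def)
qed

definition C :: "nat \<Rightarrow> nat \<Rightarrow> qsh" where
  "C m n = (\<Sum>ts\<in>compositions m n. word ts)"

lemma C_Suc: "C (Suc m) n = (\<Sum>s\<in>{1..n}. lcons s (C m (n - s)))"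
  unfolding C_def comp_Suc_sum by (simp add: lcons_sum lcons_word)

lemma C_zero: "C 0 n = (if n = 0 then word [] else 0)"
  by (simp add: C_def comp_zero)

definition A :: "nat \<Rightarrow> nat \<Rightarrow> qsh" where
  "A m n = (\<Sum>r\<in>{1..n}. \<Sum>ss\<in>compositions m (n - r). stuffle_w [r] ss)"

lemma stuffle_single: "stuffle_w [r] (s # v) =
   word (r # s # v) + lcons s (stuffle_w [r] v) + word ((r + s) # v)"
  by (simp add: lcons_word)

lemma swap_tri: "(\<Sum>r\<in>{1..(n::nat)}. \<Sum>s\<in>{1..n-r}. F r s) = (\<Sum>s\<in>{1..n}. \<Sum>r\<in>{1..n-s}. (F r s :: 'a::comm_monoid_add))"
proof -
  have "(\<Sum>r\<in>{1..n}. \<Sum>s\<in>{1..n-r}. F r s) = (\<Sum>r\<in>{1..n}. \<Sum>s\<in>{s. s \<in> {1..n} \<and> r + s \<le> n}. F r s)"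
    by (intro sum.cong) auto
  also have "\<dots> = (\<Sum>s\<in>{1..n}. \<Sum>r\<in>{r. r \<in> {1..n} \<and> r + s \<le> n}. F r s)"
    by (rule sum.swap_restrict) auto
  also have "\<dots> = (\<Sum>s\<in>{1..n}. \<Sum>r\<in>{1..n-s}. F r s)"
    by (intro sum.cong) auto
  finally show ?thesis .
qed

lemma tri_sum: "(\<Sum>r\<in>{1..(n::nat)}. \<Sum>s\<in>{1..n-r}. g (r + s)) = (\<Sum>t\<in>{1..n}. smul (int t - 1) (g t))"
proof -
  have "(\<Sum>r\<in>{1..n}. \<Sum>s\<in>{1..n-r}. g (r + s)) = (\<Sum>r\<in>{1..n}. \<Sum>t\<in>{t. t \<in> {1..n} \<and> r < t}. g t)"
  proof (rule sum.cong[OF refl])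
    fix r assume r: "r \<in> {1..n}"
    have "inj_on (\<lambda>s. r + s) {1..n-r}" by (auto simp: inj_on_def)
    moreover have "(\<lambda>s. r + s) ` {1..n-r} = {t. t \<in> {1..n} \<and> r < t}"
    proof (rule set_eqI, rule iffI)
      fix t assume "t \<in> {t. t \<in> {1..n} \<and> r < t}"
      then show "t \<in> (\<lambda>s. r + s) ` {1..n-r}"
        by (auto intro!: image_eqI[where x="t - r"])
    qed auto
    ultimately show "(\<Sum>s\<in>{1..n-r}. g (r + s)) = (\<Sum>t\<in>{t. t \<in> {1..n} \<and> r < t}. g t)"
      using sum.reindex[of "\<lambda>s. r + s" "{1..n-r}" g] by simp
  qed
  also have "\<dots> = (\<Sum>t\<in>{1..n}. \<Sum>r\<in>{r. r \<in> {1..n} \<and> r < t}. g t)"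
    by (rule sum.swap_restrict) auto
  also have "\<dots> = (\<Sum>t\<in>{1..n}. smul (int t - 1) (g t))"
  proof (rule sum.cong[OF refl])
    fix t assume t: "t \<in> {1..n}"
    have "{r. r \<in> {1..n} \<and> r < t} = {1..<t}" using t by auto
    then show "(\<Sum>r\<in>{r. r \<in> {1..n} \<and> r < t}. g t) = smul (int t - 1) (g t)"
      using t by (simp add: sum_const_smul of_nat_diff)
  qed
  finally show ?thesis .
qed


lemma A_formula: "A m n = smul (int m + 1) (C (Suc m) n) + smul (int n - int m) (C m n)"
proof (induction m arbitrary: n)
  case 0
  show ?case
  proof (cases "n = 0")
    case True then show ?thesis by (simp add: A_def C_Suc C_zero smul_zero smul_zero_left)
  next
    case False
    have "A 0 n = (\<Sum>r\<in>{1..n}. if r = n then word [n] else 0)"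
      unfolding A_def by (intro sum.cong refl) (auto simp: comp_zero)
    also have "\<dots> = word [n]" using False by (simp add: sum.delta)
    finally have a: "A 0 n = word [n]" .
    have c: "C (Suc 0) n = word [n]"
    proof -
      have "C (Suc 0) n = (\<Sum>s\<in>{1..n}. if s = n then word [n] else 0)"
        unfolding C_Suc C_zero by (intro sum.cong refl) (auto simp: lcons_word lcons_zero)
      also have "\<dots> = word [n]" using False by (simp add: sum.delta)
      finally show ?thesis .
    qed
    show ?thesis using False by (simp add: a c C_zero smul_one smul_zero)
  qed
next
  case (Suc m)
  define D where "D s = lcons s (C m (n - s))" for s
  have "A (Suc m) n = (\<Sum>r\<in>{1..n}. \<Sum>s\<in>{1..n-r}. \<Sum>v\<in>compositions m (n - r - s).
            word (r # s # v) + lcons s (stuffle_w [r] v) + word ((r + s) # v))"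
    unfolding A_def comp_Suc_sum stuffle_single ..
  also have "\<dots> = (\<Sum>r\<in>{1..n}. \<Sum>s\<in>{1..n-r}.
            lcons r (lcons s (C m (n - r - s))) + lcons s (\<Sum>v\<in>compositions m (n - s - r). stuffle_w [r] v)
            + lcons (r + s) (C m (n - (r + s))))"
  proof (intro sum.cong refl)
    fix r s
    have e: "n - r - s = n - s - r" "n - r - s = n - (r + s)" by simp_all
    show "(\<Sum>v\<in>compositions m (n - r - s). word (r # s # v) + lcons s (stuffle_w [r] v) + word ((r + s) # v)) =
      lcons r (lcons s (C m (n - r - s))) + lcons s (\<Sum>v\<in>compositions m (n - s - r). stuffle_w [r] v)
            + lcons (r + s) (C m (n - (r + s)))"
      unfolding e(1)[symmetric] e(2)[symmetric]
      by (simp add: sum.distrib C_def lcons_sum lcons_word)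
  qed
  also have "\<dots> = (\<Sum>r\<in>{1..n}. lcons r (C (Suc m) (n - r)))
       + (\<Sum>r\<in>{1..n}. \<Sum>s\<in>{1..n-r}. lcons s (\<Sum>v\<in>compositions m (n - s - r). stuffle_w [r] v))
       + (\<Sum>r\<in>{1..n}. \<Sum>s\<in>{1..n-r}. D (r + s))"
    by (simp add: sum.distrib C_Suc lcons_sum D_def)
  also have "(\<Sum>r\<in>{1..n}. lcons r (C (Suc m) (n - r))) = C (Suc (Suc m)) n"
    by (simp add: C_Suc)
  also have "(\<Sum>r\<in>{1..n}. \<Sum>s\<in>{1..n-r}. lcons s (\<Sum>v\<in>compositions m (n - s - r). stuffle_w [r] v))
      = (\<Sum>s\<in>{1..n}. lcons s (A m (n - s)))"
    unfolding A_def by (subst swap_tri) (simp add: lcons_sum diff_diff_left)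
  also have "\<dots> = smul (int m + 1) (C (Suc (Suc m)) n)
      + (\<Sum>s\<in>{1..n}. smul (int (n - s) - int m) (D s))"
    unfolding Suc.IH by (simp add: lcons_add sum.distrib C_Suc[of "Suc m"] smul_sum smul_lcons D_def)
  also have "(\<Sum>r\<in>{1..n}. \<Sum>s\<in>{1..n-r}. D (r + s)) = (\<Sum>t\<in>{1..n}. smul (int t - 1) (D t))"
    by (rule tri_sum)
  finally have "A (Suc m) n = C (Suc (Suc m)) n + smul (int m + 1) (C (Suc (Suc m)) n)
     + ((\<Sum>s\<in>{1..n}. smul (int (n - s) - int m) (D s)) + (\<Sum>t\<in>{1..n}. smul (int t - 1) (D t)))"
    by (simp add: add.assoc)
  also have "(\<Sum>s\<in>{1..n}. smul (int (n - s) - int m) (D s)) + (\<Sum>t\<in>{1..n}. smul (int t - 1) (D t))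
      = (\<Sum>s\<in>{1..n}. smul (int n - int (Suc m)) (D s))"
    unfolding sum.distrib[symmetric]
    by (intro sum.cong refl) (simp add: smul_add_left[symmetric] of_nat_diff algebra_simps)
  also have "\<dots> = smul (int n - int (Suc m)) (C (Suc m) n)"
    by (simp add: C_Suc smul_sum D_def)
  finally have "A (Suc m) n = C (Suc (Suc m)) n + smul (int m + 1) (C (Suc (Suc m)) n)
     + smul (int n - int (Suc m)) (C (Suc m) n)" .
  then show ?case by (simp add: smul_self add.commute)
qed


theorem theorem2p3:
  fixes k n :: nat
  assumes "2 \<le> k" and "k \<le> n"
  shows "(\<Sum>(r, ss) \<in> {(r, ss). 1 \<le> r \<and> length ss = k - 1 \<and> (\<forall>s\<in>set ss. 1 \<le> s)
                           \<and> r + sum_list ss = n}.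
            word [r] \<star> word ss)
       = smul (int k) (\<Sum>ts\<in>compositions k n. word ts)
         + smul (int (n - k + 1)) (\<Sum>us\<in>compositions (k - 1) n. word us)"
proof -
  have S: "{(r, ss). 1 \<le> r \<and> length ss = k - 1 \<and> (\<forall>s\<in>set ss. 1 \<le> s) \<and> r + sum_list ss = n}
      = Sigma {1..n} (\<lambda>r. compositions (k - 1) (n - r))"
    by (auto simp: compositions_def)
  have "(\<Sum>(r, ss) \<in> {(r, ss). 1 \<le> r \<and> length ss = k - 1 \<and> (\<forall>s\<in>set ss. 1 \<le> s)
                           \<and> r + sum_list ss = n}. word [r] \<star> word ss) = A (k - 1) n"
    unfolding S A_def by (subst sum.Sigma) (simp_all add: comp_finite stuffle_words)
  also have "\<dots> = smul (int k) (C k n) + smul (int (n - k + 1)) (C (k - 1) n)"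
  proof -
    have "int (k - 1) + 1 = int k" "int n - int (k - 1) = int (n - k + 1)" "Suc (k - 1) = k"
      using assms by (simp_all add: of_nat_diff)
    note e = this
    show ?thesis using A_formula[of "k - 1" n] unfolding e .
  qed
  finally show ?thesis by (simp add: C_def)
qed

end
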